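(* For every $n\ge2$, $S_{2,0}(2n-1)=-\dfrac{3B_{2n}}{n}$.
   Context: $B_m$ denotes the $m$-th Bernoulli number. Let $a_0,a_1,\dots$ be indeterminates and $a(x)=\sum_{i\ge0}a_ix^i$. For a positive integer $j$ set $G(x)=\prod_{i=0}^{j-1}\frac{1+a(x)x^2}{1+ix}$, $H(x)=\prod_{i=1-j}^{-1}\frac{1+ix}{1+a(x)x^2}$, $u=2j-1$, $v=j(j-1)$. For each $n\ge1$ there are unique polynomials $S_0(n),\dots,S_n(n)\in\mathbb{Q}[a_0,\dots,a_{n-2}]$, independent of $j$, such that for every positive integer $j$ the coefficient of $x^{n-1}$ in $\frac{G(x)-H(x)}{x^2}(1+a(x)x^2)$ equals $u\big(a_{n-1}+S_0(n)+\sum_{i=1}^nS_i(n)v^i\big)$. For $1\le i\le n$, $S_{i,0}(n)\in\mathbb{Q}$ denotes the constant term of $S_i(n)$. *)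

theory Defs
  imports "HOL-Computational_Algebra.Formal_Power_Series"
begin

text \<open>Bernoulli numbers via the standard recursion
  B_0 = 1, B_m = -(1/(m+1)) * sum_{k<m} binom(m+1,k) B_k  (so B_1 = -1/2;
  the convention for B_1 is irrelevant for even indices).\<close>
fun bernoulli :: "nat \<Rightarrow> rat" where
  "bernoulli m = (if m = 0 then 1
     else - (\<Sum>k<m. of_nat (Suc m choose k) * bernoulli k) / of_nat (Suc m))"

text \<open>The power series a(x) = sum a_i x^i, with the indeterminates a_i evaluated
  at rational values given by the sequence a.\<close>
definition aser :: "(nat \<Rightarrow> rat) \<Rightarrow> rat fps" where
  "aser a = Abs_fps a"

definition Gser :: "(nat \<Rightarrow> rat) \<Rightarrow> nat \<Rightarrow> rat fps" where
  "Gser a j = (\<Prod>i\<in>{0..<j}. (1 + aser a * fps_X ^ 2) / (1 + of_nat i * fps_X))"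

definition Hser :: "(nat \<Rightarrow> rat) \<Rightarrow> nat \<Rightarrow> rat fps" where
  "Hser a j = (\<Prod>i\<in>{1 - int j..-1}. (1 + of_int i * fps_X) / (1 + aser a * fps_X ^ 2))"

text \<open>Coefficient of x^(n-1) in ((G(x) - H(x)) / x^2) * (1 + a(x) x^2).
  Division by x^2 is fps_shift 2 (exact, as G - H = O(x^2)).\<close>
definition lhs_coeff :: "nat \<Rightarrow> (nat \<Rightarrow> rat) \<Rightarrow> nat \<Rightarrow> rat" where
  "lhs_coeff n a j =
     fps_nth (fps_shift 2 (Gser a j - Hser a j) * (1 + aser a * fps_X ^ 2)) (n - 1)"

text \<open>S is a valid choice of S_0(n),...,S_n(n), each given as a function of the
  (rational values of the) indeterminates a_0, a_1, ...: for every valuation a and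
  every positive integer j the coefficient identity holds, with u = 2j-1, v = j(j-1).
  A polynomial identity over Q is the same as an identity under all rational
  valuations, so the constant term S_{i,0}(n) is S i evaluated at a = 0.\<close>
definition S_spec :: "nat \<Rightarrow> (nat \<Rightarrow> (nat \<Rightarrow> rat) \<Rightarrow> rat) \<Rightarrow> bool" where
  "S_spec n S \<longleftrightarrow> (\<forall>a j. j \<ge> 1 \<longrightarrow>
     lhs_coeff n a j =
       (2 * of_nat j - 1) * (a (n - 1) + S 0 a +
          (\<Sum>i=1..n. S i a * (of_nat j * (of_nat j - 1)) ^ i)))"

end

theory Submission
  imports Defs "HOL-Computational_Algebra.Polynomial"
begin

unbundle fps_syntax


fun Fp :: "nat \<Rightarrow> rat poly" where
  "Fp m = smult (1 / of_nat (Suc m))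
     ([:0,1:]^(Suc m) - (\<Sum>k<m. smult (of_nat (Suc m choose k)) (Fp k)))"

declare Fp.simps[simp del] bernoulli.simps[simp del]

lemma Fp_nat: "poly (Fp m) (of_nat j) = (\<Sum>i<j. (of_nat i :: rat) ^ m)"
proof (induction m rule: less_induct)
  case (less m)
  have tel: "(of_nat j :: rat) ^ Suc m = (\<Sum>i<j. (of_nat (Suc i)::rat) ^ Suc m - of_nat i ^ Suc m)"
    by (subst sum_lessThan_telescope) (simp add: power_0_left)
  have bin: "(of_nat (Suc i)::rat) ^ Suc m - of_nat i ^ Suc m
      = (\<Sum>k<Suc m. of_nat (Suc m choose k) * of_nat i ^ k)" for i
  proof -
    have "(of_nat (Suc i)::rat) ^ Suc m = (of_nat i + 1) ^ Suc m" by (simp add: add.commute)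
    also have "\<dots> = (\<Sum>k\<le>Suc m. of_nat (Suc m choose k) * of_nat i ^ k * 1 ^ (Suc m - k))"
      by (rule binomial_ring)
    also have "\<dots> = (\<Sum>k<Suc m. of_nat (Suc m choose k) * of_nat i ^ k) + of_nat i ^ Suc m"
      by (simp add: lessThan_Suc_atMost[symmetric])
    finally show ?thesis by simp
  qed
  have "(of_nat j :: rat) ^ Suc m = (\<Sum>k<Suc m. of_nat (Suc m choose k) * (\<Sum>i<j. (of_nat i::rat) ^ k))"
    unfolding tel bin by (simp add: sum.swap sum_distrib_left)
  also have "\<dots> = (\<Sum>k<m. of_nat (Suc m choose k) * poly (Fp k) (of_nat j)) + of_nat (Suc m) * (\<Sum>i<j. (of_nat i::rat) ^ m)"
    using less by simp
  finally have "of_nat (Suc m) * (\<Sum>i<j. (of_nat i::rat) ^ m) = (of_nat j :: rat) ^ Suc m - (\<Sum>k<m. of_nat (Suc m choose k) * poly (Fp k) (of_nat j))"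
    by simp
  then show ?case
    by (subst Fp.simps) (simp add: poly_sum field_simps del: of_nat_Suc)
qed

lemma poly_eq_nat:
  fixes p q :: "rat poly"
  assumes "\<And>j. j \<ge> k \<Longrightarrow> poly p (of_nat j) = poly q (of_nat j)"
  shows "p = q"
proof (rule ccontr)
  assume "p \<noteq> q"
  then have "p - q \<noteq> 0" by simp
  then have fin: "finite {x. poly (p - q) x = 0}" by (rule poly_roots_finite)
  have "of_nat ` {k..} \<subseteq> {x. poly (p - q) x = 0}"
    using assms by auto
  moreover have "infinite (of_nat ` {k..} :: rat set)"
  proof
    assume "finite (of_nat ` {k..} :: rat set)"
    then have "finite {k..}" by (rule finite_imageD) (simp add: inj_on_def)
    then show False using infinite_Ici[of k] by simp
  qed
  ultimately show False using fin finite_subset by blast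
qed

lemma Fp_0: "poly (Fp m) 0 = 0"
  using Fp_nat[of m 0] by simp

lemma Fp_1: "m \<ge> 1 \<Longrightarrow> poly (Fp m) 1 = 0"
  using Fp_nat[of m 1] by simp

lemma Fp_shift_poly: "Fp m \<circ>\<^sub>p [:1,1:] = Fp m + [:0,1:]^m"
proof (rule poly_eq_nat[where k=0])
  fix j :: nat
  have "poly [:1,1:] (of_nat j :: rat) = of_nat (Suc j)" by simp
  then show "poly (Fp m \<circ>\<^sub>p [:1, 1:]) (of_nat j) = poly (Fp m + [:0, 1:] ^ m) (of_nat j)"
    by (simp only: poly_pcompose Fp_nat) (simp add: poly_monom Fp_nat)
qed

lemma Fp_shift: "poly (Fp m) (x+1) = poly (Fp m) x + x^m"
  using arg_cong[OF Fp_shift_poly, of "\<lambda>p. poly p x"] by (simp add: poly_pcompose add.commute)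

lemma Fp_refl: 
  assumes "m \<ge> 1"
  shows "poly (Fp m) (1-x) = (-1)^(Suc m) * poly (Fp m) x"
proof -
  define G where "G x = poly (Fp m) (1-x) - (-1)^(Suc m) * poly (Fp m) x" for x
  have per: "G (x+1) = G x" for x
  proof -
    have "poly (Fp m) (1 - x) = poly (Fp m) (-x) + (-x)^m"
      using Fp_shift[of m "-x"] by simp
    moreover have "poly (Fp m) (x+1) = poly (Fp m) x + x^m" by (rule Fp_shift)
    ultimately show ?thesis unfolding G_def
      by (simp add: power_minus[of x] algebra_simps)
  qed
  have G0: "G 0 = 0" unfolding G_def using Fp_0 Fp_1[OF assms] by simp
  have Gn: "G (of_nat j) = 0" for j
    by (induction j) (simp_all add: G0, metis per add.commute)
  define q where "q = Fp m \<circ>\<^sub>p [:1,-1:] - smult ((-1)^(Suc m)) (Fp m)"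
  have "q = 0"
    by (rule poly_eq_nat[where k=0]) (use Gn in \<open>simp add: q_def G_def poly_pcompose\<close>)
  then have "poly q x = 0" by simp
  then show ?thesis by (simp add: q_def poly_pcompose)
qed

lemma Xpow: "[:0,1:]^k = monom (1::'a::comm_ring_1) k"
  by (simp add: monom_altdef)

lemma Fp_coeff1: "coeff (Fp m) 1 = bernoulli m"
proof (induction m rule: less_induct)
  case (less m)
  show ?case
  proof (cases "m = 0")
    case True
    then show ?thesis by (subst Fp.simps, subst bernoulli.simps) (simp add: Xpow)
  next
    case False
    have "coeff (Fp m) 1 = - (\<Sum>k<m. of_nat (Suc m choose k) * coeff (Fp k) 1) / of_nat (Suc m)"
      using False by (subst Fp.simps) (simp add: Xpow coeff_sum divide_inverse mult.commute del: of_nat_Suc)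
    also have "\<dots> = bernoulli m"
      using False less by (subst bernoulli.simps) (auto intro!: sum.cong)
    finally show ?thesis .
  qed
qed

lemma Fp_degree: "degree (Fp m) \<le> Suc m"
proof (induction m rule: less_induct)
  case (less m)
  have d1: "degree ([:0,1::rat:]^(Suc m)) \<le> Suc m" by (simp add: Xpow degree_monom_le)
  have d2: "degree (\<Sum>k<m. smult (of_nat (Suc m choose k)) (Fp k)) \<le> Suc m"
  proof (rule degree_sum_le)
    fix k assume "k \<in> {..<m}"
    then have "degree (Fp k) \<le> Suc m" using less[of k] by simp
    then show "degree (smult (of_nat (Suc m choose k)) (Fp k)) \<le> Suc m"
      using degree_smult_le order.trans by blast
  qed simp
  have "degree (Fp m) = degree (smult (1 / of_nat (Suc m))
     ([:0,1:]^(Suc m) - (\<Sum>k<m. smult (of_nat (Suc m choose k)) (Fp k))))"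
    by (subst Fp.simps) (rule refl)
  also have "\<dots> \<le> Suc m"
    using degree_smult_le degree_diff_le[OF d1 d2] order.trans by blast
  finally show ?case .
qed

lemma Fp_coeff2:
  assumes "even m" "m \<ge> 4"
  shows "coeff (Fp m) 2 = 0"
proof -
  define P where "P = Fp m"
  define P2 where "P2 = pderiv (pderiv P)"
  have s1: "pderiv (pderiv (P \<circ>\<^sub>p [:1,1:])) = P2 \<circ>\<^sub>p [:1,1:]"
    by (simp add: pderiv_pcompose P2_def pderiv_pCons)
  have "pderiv (pderiv (P \<circ>\<^sub>p [:1,1:])) = P2 + pderiv (pderiv (monom 1 m))"
    unfolding P_def P2_def Fp_shift_poly by (simp add: Xpow pderiv_add)
  from arg_cong[OF trans[OF s1[symmetric] this], of "\<lambda>p. poly p 0"]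
  have e1: "poly P2 1 = poly P2 0"
    using assms by (simp add: poly_pcompose pderiv_monom poly_monom)
  have r: "P \<circ>\<^sub>p [:1,-1:] = smult (-1) P"
    unfolding P_def using Fp_refl assms
    by (intro poly_eq_nat[where k=0]) (simp add: poly_pcompose)
  have s2: "pderiv (pderiv (P \<circ>\<^sub>p [:1,-1:])) = P2 \<circ>\<^sub>p [:1,-1:]"
    by (simp add: pderiv_pcompose P2_def pderiv_pCons pderiv_minus)
  have "pderiv (pderiv (P \<circ>\<^sub>p [:1,-1:])) = smult (-1) P2"
    unfolding r P2_def by (simp add: pderiv_smult pderiv_minus)
  from arg_cong[OF trans[OF s2[symmetric] this], of "\<lambda>p. poly p 0"]
  have e2: "poly P2 1 = - poly P2 0"
    by (simp add: poly_pcompose)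
  have "poly P2 0 = 0" using e1 e2 by simp
  moreover have "poly P2 0 = 2 * coeff P 2"
    by (simp add: P2_def poly_0_coeff_0 coeff_pderiv numeral_2_eq_2)
  ultimately show ?thesis by (simp add: P_def)
qed

primrec odl :: "(nat \<Rightarrow> rat poly) \<Rightarrow> nat \<Rightarrow> rat poly list" where
  "odl D 0 = [1]"
| "odl D (Suc m) = odl D m @ [smult (1 / of_nat (Suc m)) (\<Sum>k\<le>m. odl D m ! k * D (m - k))]"

lemma odl_length[simp]: "length (odl D m) = Suc m"
  by (induction m) auto

lemma odl_prefix: "k \<le> m \<Longrightarrow> odl D m ! k = odl D k ! k"
proof (induction m)
  case 0 then show ?case by simp
next
  case (Suc m)
  show ?case
  proof (cases "k = Suc m")
    case True then show ?thesis by simp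
  next
    case False
    then have "k \<le> m" using Suc.prems by simp
    then have "odl D (Suc m) ! k = odl D m ! k"
      by (simp only: odl.simps nth_append odl_length) simp
    then show ?thesis using Suc.IH \<open>k \<le> m\<close> by simp
  qed
qed

definition odesol :: "(nat \<Rightarrow> rat poly) \<Rightarrow> nat \<Rightarrow> rat poly" where
  "odesol D m = odl D m ! m"

lemma odesol_0[simp]: "odesol D 0 = 1"
  by (simp add: odesol_def)

lemma odesol_Suc: "odesol D (Suc m) = smult (1 / of_nat (Suc m)) (\<Sum>k\<le>m. odesol D k * D (m - k))"
proof -
  have "odesol D (Suc m) = smult (1 / of_nat (Suc m)) (\<Sum>k\<le>m. odl D m ! k * D (m - k))"
    unfolding odesol_def by (simp only: odl.simps nth_append odl_length) simp
  also have "\<dots> = smult (1 / of_nat (Suc m)) (\<Sum>k\<le>m. odesol D k * D (m - k))"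
    unfolding odesol_def by (intro arg_cong[where f="smult _"] sum.cong refl) (simp add: odl_prefix[of _ m])
  finally show ?thesis .
qed

lemma odesol_refl:
  assumes "\<And>k x. poly (D2 k) x = poly (D1 k) (1 - x)"
  shows "poly (odesol D2 m) x = poly (odesol D1 m) (1 - x)"
proof (induction m arbitrary: x rule: less_induct)
  case (less m)
  show ?case
  proof (cases m)
    case 0
    then show ?thesis by simp
  next
    case (Suc m')
    have "poly (odesol D2 m) x = (1 / of_nat (Suc m')) * (\<Sum>k\<le>m'. poly (odesol D2 k) x * poly (D2 (m' - k)) x)"
      unfolding Suc by (simp only: odesol_Suc poly_smult poly_sum poly_mult)
    also have "\<dots> = (1 / of_nat (Suc m')) * (\<Sum>k\<le>m'. poly (odesol D1 k) (1 - x) * poly (D1 (m' - k)) (1 - x))"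
      using less Suc assms by (intro arg_cong2[where f="(*)"] refl sum.cong) auto
    also have "\<dots> = poly (odesol D1 m) (1 - x)"
      unfolding Suc by (simp only: odesol_Suc poly_smult poly_sum poly_mult)
    finally show ?thesis .
  qed
qed

lemma odesol_degree:
  assumes "\<And>k. degree (D k) \<le> k + 2"
  shows "degree (odesol D m) \<le> 2 * m"
proof (induction m rule: less_induct)
  case (less m)
  show ?case
  proof (cases m)
    case 0
    then show ?thesis by simp
  next
    case (Suc m')
    have "degree (odesol D k * D (m' - k)) \<le> 2 * m" if "k \<le> m'" for k
    proof -
      have "degree (odesol D k * D (m' - k)) \<le> degree (odesol D k) + degree (D (m' - k))"
        by (rule degree_mult_le)
      also have "\<dots> \<le> 2 * k + (m' - k + 2)"
        using less[of k] that Suc assms[of "m' - k"] by (intro add_mono) auto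
      also have "\<dots> \<le> 2 * m" using that Suc by simp
      finally show ?thesis .
    qed
    then have "degree (\<Sum>k\<le>m'. odesol D k * D (m' - k)) \<le> 2 * m"
      by (intro degree_sum_le) auto
    then show ?thesis using Suc
      by (simp add: odesol_Suc del: of_nat_Suc)
  qed
qed

lemma sym_decomp:
  fixes p :: "rat poly"
  assumes "\<And>x. poly p (1 - x) = poly p x"
  shows "\<exists>q. degree q \<le> degree p div 2 \<and> (\<forall>x. poly p x = poly q (x * (x - 1)))"
  using assms
proof (induction "degree p" arbitrary: p rule: less_induct)
  case less
  define c where "c = poly p 0"
  define r where "r = p - [:c:]"
  show ?case
  proof (cases "r = 0")
    case True
    then show ?thesis by (intro exI[of _ "[:c:]"]) (simp add: r_def)
  next
    case False
    have r0: "poly r 0 = 0" by (simp add: r_def c_def)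
    have r1: "poly r 1 = 0" using less.prems[of 0] by (simp add: r_def c_def)
    obtain r1 where er1: "r = [:0,1:] * r1" using r0 by (metis dvdE minus_zero poly_eq_0_iff_dvd)
    have "poly r1 1 = 0" using r1 er1 by simp
    then obtain p2 where ep2: "r1 = [:-1,1:] * p2" by (metis dvdE poly_eq_0_iff_dvd)
    have er: "r = [:0,-1,1:] * p2" using er1 ep2 by simp
    have p2nz: "p2 \<noteq> 0" using False er by auto
    have "degree r = degree [:0,-1,1::rat:] + degree p2" unfolding er
      by (rule degree_mult_eq) (simp_all add: p2nz)
    then have degr: "degree r = degree p2 + 2" by simp
    have degp: "degree p = degree r"
    proof -
      have "degree r > 0" using degr by simp
      then show ?thesis unfolding r_def
        by (metis add_diff_cancel_right' degree_add_eq_left degree_pCons_0 diff_add_cancel)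
    qed
    have symr: "poly r (1 - x) = poly r x" for x using less.prems[of x] by (simp add: r_def)
    have sym2: "poly p2 (1 - x) = poly p2 x" for x
    proof -
      have "p2 \<circ>\<^sub>p [:1,-1:] = p2"
      proof (rule poly_eq_nat[where k=2])
        fix j :: nat assume "j \<ge> 2"
        then have nz: "(of_nat j :: rat) * (of_nat j - 1) \<noteq> 0" by auto
        have "poly r (1 - of_nat j) = poly r (of_nat j)" by (rule symr)
        then have "(of_nat j :: rat) * (of_nat j - 1) * poly p2 (1 - of_nat j) = of_nat j * (of_nat j - 1) * poly p2 (of_nat j)"
          unfolding er by (simp add: algebra_simps)
        then show "poly (p2 \<circ>\<^sub>p [:1,-1:]) (of_nat j) = poly p2 (of_nat j)"
          using nz by (simp add: poly_pcompose)
      qed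
      from arg_cong[OF this, of "\<lambda>q. poly q x"] show ?thesis by (simp add: poly_pcompose)
    qed
    obtain q2 where q2: "degree q2 \<le> degree p2 div 2" "\<forall>x. poly p2 x = poly q2 (x * (x - 1))"
      using less.hyps[of p2] sym2 degr degp by auto
    show ?thesis
    proof (intro exI[of _ "pCons c q2"] conjI allI)
      show "degree (pCons c q2) \<le> degree p div 2"
        using q2(1) degr degp by (cases "q2 = 0") auto
      fix x
      have "poly p x = c + poly r x" by (simp add: r_def)
      also have "\<dots> = poly (pCons c q2) (x * (x - 1))" using q2(2) by (simp add: er algebra_simps)
      finally show "poly p x = poly (pCons c q2) (x * (x - 1))" .
    qed
  qed
qed

lemma anti_decomp:
  fixes p :: "rat poly"
  assumes "\<And>x. poly p (1 - x) = - poly p x"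
  shows "\<exists>q. degree q \<le> (degree p - 1) div 2 \<and> (\<forall>x. poly p x = (2 * x - 1) * poly q (x * (x - 1)))"
proof (cases "p = 0")
  case True
  then show ?thesis by (intro exI[of _ 0]) simp
next
  case False
  have "poly p (1/2) = 0" using assms[of "1/2"] by simp
  then obtain r where er: "p = [:-(1/2),1:] * r" by (metis dvdE minus_minus poly_eq_0_iff_dvd)
  define p1 where "p1 = smult (1/2) r"
  have ep: "p = [:-1,2:] * p1" unfolding er p1_def by (rule poly_ext) (simp add: algebra_simps)
  have p1nz: "p1 \<noteq> 0" using False ep by auto
  have "degree p = degree [:-1,2::rat:] + degree p1" unfolding ep
    by (rule degree_mult_eq) (simp_all add: p1nz)
  then have degp: "degree p = degree p1 + 1" by simp
  have sym1: "poly p1 (1 - x) = poly p1 x" for x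
  proof -
    have "p1 \<circ>\<^sub>p [:1,-1:] = p1"
    proof (rule poly_eq_nat[where k=1])
      fix j :: nat assume "j \<ge> 1"
      then have nz: "2 * (of_nat j :: rat) - 1 \<noteq> 0" by linarith
      have "poly p (1 - of_nat j) = - poly p (of_nat j)" by (rule assms)
      then have "(2 * (of_nat j :: rat) - 1) * poly p1 (1 - of_nat j) = (2 * of_nat j - 1) * poly p1 (of_nat j)"
        unfolding ep by (simp add: algebra_simps)
      then show "poly (p1 \<circ>\<^sub>p [:1,-1:]) (of_nat j) = poly p1 (of_nat j)"
        using nz by (simp add: poly_pcompose)
    qed
    from arg_cong[OF this, of "\<lambda>q. poly q x"] show ?thesis by (simp add: poly_pcompose)
  qed
  obtain q where q: "degree q \<le> degree p1 div 2" "\<forall>x. poly p1 x = poly q (x * (x - 1))"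
    using sym_decomp[OF sym1] by blast
  show ?thesis
  proof (intro exI[of _ q] conjI allI)
    show "degree q \<le> (degree p - 1) div 2" using q(1) degp by simp
    fix x
    have "poly p x = poly [:-1,2:] x * poly p1 x" by (subst ep, rule poly_mult)
    then show "poly p x = (2 * x - 1) * poly q (x * (x - 1))" using q(2) by simp
  qed
qed





lemma odesol_eval:
  fixes E Df :: "nat \<Rightarrow> rat fps"
  assumes "j \<ge> jz" "\<And>j. j \<ge> jz \<Longrightarrow> fps_deriv (E j) = E j * Df j"
    "\<And>j. j \<ge> jz \<Longrightarrow> E j $ 0 = 1" "\<And>j k. j \<ge> jz \<Longrightarrow> Df j $ k = poly (D k) (of_nat j)"
  shows "E j $ m = poly (odesol D m) (of_nat j)"
proof (induction m rule: less_induct)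
  case (less m)
  show ?case
  proof (cases m)
    case 0
    then show ?thesis using assms by simp
  next
    case (Suc m')
    have "fps_deriv (E j) $ m' = (E j * Df j) $ m'" using assms by simp
    then have "of_nat (Suc m') * E j $ Suc m' = (\<Sum>i=0..m'. E j $ i * Df j $ (m' - i))"
      by (simp add: fps_mult_nth del: of_nat_Suc)
    also have "\<dots> = (\<Sum>i\<le>m'. poly (odesol D i) (of_nat j) * poly (D (m' - i)) (of_nat j))"
      using less Suc assms by (auto simp: atLeast0AtMost intro!: sum.cong)
    finally show ?thesis using Suc
      by (simp add: odesol_Suc poly_sum field_simps del: of_nat_Suc)
  qed
qed

definition Af :: "(nat \<Rightarrow> rat) \<Rightarrow> rat fps" where "Af a = 1 + aser a * fps_X^2"

lemma Af0[simp]: "Af a $ 0 = 1"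
  unfolding Af_def by (simp add: fps_X_power_mult_right_nth)

lemma Af1[simp]: "Af a $ Suc 0 = 0"
  unfolding Af_def by (simp add: fps_X_power_mult_right_nth)

definition cA :: "(nat \<Rightarrow> rat) \<Rightarrow> nat \<Rightarrow> rat" where
  "cA a k = (fps_deriv (Af a) * inverse (Af a)) $ k"

lemma cA0: "cA a 0 = 0"
  by (simp add: cA_def)

lemma inv_lin: "inverse (1 + fps_const (c::rat) * fps_X) = Abs_fps (\<lambda>k. (-c)^k)"
proof -
  have "(1 + fps_const c * fps_X) * Abs_fps (\<lambda>k. (- c) ^ k) = 1"
  proof (rule fps_ext)
    fix n
    show "((1 + fps_const c * fps_X) * Abs_fps (\<lambda>k. (- c) ^ k)) $ n = (1::rat fps) $ n"
      by (cases n) (simp_all add: algebra_simps)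
  qed
  then show ?thesis by (rule fps_inverse_unique)
qed

lemma ode_step:
  fixes E U D :: "rat fps"
  assumes "fps_deriv E = E * D" "U $ 0 \<noteq> 0"
  shows "fps_deriv (E * U) = (E * U) * (D + fps_deriv U * inverse U)"
proof -
  have iU: "U * inverse U = 1" using assms(2) by (rule inverse_mult_eq_1')
  have "(E * U) * (D + fps_deriv U * inverse U) = (E * D) * U + E * fps_deriv U * (U * inverse U)"
    by (simp only: algebra_simps)
  also have "\<dots> = fps_deriv E * U + E * fps_deriv U" by (simp only: iU assms(1) mult_1_right)
  also have "\<dots> = fps_deriv (E * U)" by (simp only: fps_deriv_mult add.commute)
  finally show ?thesis ..
qed

lemma logquot:
  fixes P Q :: "rat fps"
  assumes "P $ 0 \<noteq> 0" "Q $ 0 \<noteq> 0"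
  shows "fps_deriv (P * inverse Q) * inverse (P * inverse Q)
     = fps_deriv P * inverse P - fps_deriv Q * inverse Q"
proof -
  have iP: "P * inverse P = 1" and iQ: "Q * inverse Q = 1"
    using assms by (simp_all add: inverse_mult_eq_1')
  have inv: "inverse (P * inverse Q) = inverse P * Q"
    using assms by (simp add: fps_inverse_mult)
  have dQ: "fps_deriv (inverse Q) = - fps_deriv Q * (inverse Q)^2"
    using assms by (simp add: fps_inverse_deriv)
  have "fps_deriv (P * inverse Q) * inverse (P * inverse Q)
     = (P * fps_deriv (inverse Q) + fps_deriv P * inverse Q) * (inverse P * Q)"
    by (simp only: inv fps_deriv_mult)
  also have "\<dots> = fps_deriv P * inverse P * (Q * inverse Q) - fps_deriv Q * inverse Q * (Q * inverse Q) * (P * inverse P)"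
    by (simp add: dQ power2_eq_square algebra_simps)
  also have "\<dots> = fps_deriv P * inverse P - fps_deriv Q * inverse Q"
    by (simp only: iP iQ mult_1_right)
  finally show ?thesis .
qed


definition D1p :: "(nat \<Rightarrow> rat) \<Rightarrow> nat \<Rightarrow> rat poly" where
  "D1p a k = smult (cA a k) [:1,1:] - smult ((-1)^k) (Fp (Suc k))"

definition D2p :: "(nat \<Rightarrow> rat) \<Rightarrow> nat \<Rightarrow> rat poly" where
  "D2p a k = smult (- cA a k) [:-2,1:] - Fp (Suc k)"

lemma poly_D1p: "poly (D1p a k) x = cA a k * (1 + x) - (-1)^k * poly (Fp (Suc k)) x"
  by (simp add: D1p_def algebra_simps)

lemma poly_D2p: "poly (D2p a k) x = - cA a k * (x - 2) - poly (Fp (Suc k)) x"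
  by (simp add: D2p_def algebra_simps)

definition D1f :: "(nat \<Rightarrow> rat) \<Rightarrow> nat \<Rightarrow> rat fps" where
  "D1f a j = Abs_fps (\<lambda>k. poly (D1p a k) (of_nat j))"

definition D2f :: "(nat \<Rightarrow> rat) \<Rightarrow> nat \<Rightarrow> rat fps" where
  "D2f a j = Abs_fps (\<lambda>k. poly (D2p a k) (of_nat j))"

lemma iAf: "Af a * inverse (Af a) = 1"
  by (rule inverse_mult_eq_1') simp

lemma E1_ode: "fps_deriv (Gser a j * Af a) = (Gser a j * Af a) * D1f a j \<and> (Gser a j * Af a) $ 0 = 1"
proof (induction j)
  case 0
  have "D1f a 0 = fps_deriv (Af a) * inverse (Af a)"
    by (rule fps_ext) (simp add: D1f_def poly_D1p Fp_0 cA_def)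
  then have "Af a * D1f a 0 = fps_deriv (Af a) * (Af a * inverse (Af a))"
    by (simp only: ac_simps)
  then show ?case by (simp add: Gser_def iAf)
next
  case (Suc j)
  define B where "B = 1 + fps_const (of_nat j :: rat) * fps_X"
  define U where "U = Af a * inverse B"
  have B0: "B $ 0 = 1" by (simp add: B_def)
  have U0: "U $ 0 = 1" by (simp add: U_def B0)
  have GS: "Gser a (Suc j) * Af a = (Gser a j * Af a) * U"
  proof -
    have "Gser a (Suc j) = Gser a j * ((1 + aser a * fps_X ^ 2) / (1 + of_nat j * fps_X))"
      by (simp add: Gser_def)
    also have "(1 + aser a * fps_X ^ 2) / (1 + of_nat j * fps_X) = U"
      by (simp add: U_def B_def Af_def fps_divide_unit fps_of_nat[symmetric])
    finally show ?thesis by (simp add: ac_simps)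
  qed
  have dU: "fps_deriv U * inverse U = fps_deriv (Af a) * inverse (Af a) - fps_deriv B * inverse B"
    unfolding U_def by (rule logquot) (simp_all add: B0)
  have D1eq: "D1f a j + fps_deriv U * inverse U = D1f a (Suc j)"
  proof (rule fps_ext)
    fix k
    have "(fps_deriv B * inverse B) $ k = of_nat j * (- of_nat j)^k"
      by (simp add: B_def inv_lin)
    also have "\<dots> = (-1)^k * of_nat j ^ Suc k"
      by (simp add: power_minus[of "of_nat j :: rat"])
    finally have c1: "(fps_deriv B * inverse B) $ k = (-1)^k * of_nat j ^ Suc k" .
    have c2: "(fps_deriv U * inverse U) $ k = cA a k - (-1)^k * of_nat j ^ Suc k"
      unfolding dU fps_sub_nth c1 cA_def ..
    have c3: "poly (Fp (Suc k)) (of_nat (Suc j)) = poly (Fp (Suc k)) (of_nat j) + of_nat j ^ Suc k"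
      using Fp_shift[of "Suc k" "of_nat j"] by (simp add: add.commute)
    show "(D1f a j + fps_deriv U * inverse U) $ k = D1f a (Suc j) $ k"
      unfolding D1f_def fps_add_nth fps_nth_Abs_fps c2 poly_D1p c3
      by (simp add: algebra_simps)
  qed
  have der: "fps_deriv ((Gser a j * Af a) * U) = ((Gser a j * Af a) * U) * (D1f a j + fps_deriv U * inverse U)"
    by (rule ode_step) (use Suc U0 in simp_all)
  have "((Gser a j * Af a) * U) $ 0 = 1" using Suc U0 by simp
  then show ?case using der unfolding GS D1eq by simp
qed


lemma Hset_Suc: "{1 - int (Suc (Suc j))..-1} = insert (- int (Suc j)) {1 - int (Suc j)..-1}"
  by auto

lemma E2_ode: "fps_deriv (Hser a (Suc j) * Af a) = (Hser a (Suc j) * Af a) * D2f a (Suc j)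
   \<and> (Hser a (Suc j) * Af a) $ 0 = 1"
proof (induction j)
  case 0
  have "D2f a 1 = fps_deriv (Af a) * inverse (Af a)"
    by (rule fps_ext) (simp add: D2f_def poly_D2p Fp_1 cA_def)
  then have "Af a * D2f a 1 = fps_deriv (Af a) * (Af a * inverse (Af a))"
    by (simp only: ac_simps)
  then show ?case by (simp add: Hser_def iAf)
next
  case (Suc j)
  define J where "J = (of_nat (Suc j) :: rat)"
  define B where "B = 1 + fps_const (- J) * fps_X"
  define W where "W = B * inverse (Af a)"
  have B0: "B $ 0 = 1" by (simp add: B_def)
  have W0: "W $ 0 = 1" by (simp add: W_def B0)
  have HS: "Hser a (Suc (Suc j)) * Af a = (Hser a (Suc j) * Af a) * W"
  proof -
    have "Hser a (Suc (Suc j)) = ((1 + of_int (- int (Suc j)) * fps_X) / (1 + aser a * fps_X ^ 2)) * Hser a (Suc j)"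
      unfolding Hser_def Hset_Suc by (subst prod.insert) auto
    also have "(1 + of_int (- int (Suc j)) * fps_X) / (1 + aser a * fps_X ^ 2) = W"
      by (simp add: W_def B_def J_def Af_def fps_divide_unit fps_of_int[symmetric])
    finally show ?thesis by (simp add: ac_simps)
  qed
  have dW: "fps_deriv W * inverse W = fps_deriv B * inverse B - fps_deriv (Af a) * inverse (Af a)"
    unfolding W_def by (rule logquot) (simp_all add: B0)
  have D2eq: "D2f a (Suc j) + fps_deriv W * inverse W = D2f a (Suc (Suc j))"
  proof (rule fps_ext)
    fix k
    have c1: "(fps_deriv B * inverse B) $ k = - J * J ^ k"
      by (simp add: B_def inv_lin)
    have c2: "(fps_deriv W * inverse W) $ k = - J * J ^ k - cA a k"
      unfolding dW fps_sub_nth c1 cA_def ..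
    have c3: "poly (Fp (Suc k)) (of_nat (Suc (Suc j))) = poly (Fp (Suc k)) J + J ^ Suc k"
      using Fp_shift[of "Suc k" J] by (simp add: add.commute J_def)
    show "(D2f a (Suc j) + fps_deriv W * inverse W) $ k = D2f a (Suc (Suc j)) $ k"
      unfolding D2f_def fps_add_nth fps_nth_Abs_fps c2 poly_D2p c3 J_def[symmetric]
      by (simp add: algebra_simps J_def)
  qed
  have der: "fps_deriv ((Hser a (Suc j) * Af a) * W) = ((Hser a (Suc j) * Af a) * W) * (D2f a (Suc j) + fps_deriv W * inverse W)"
    by (rule ode_step) (use Suc W0 in simp_all)
  have "((Hser a (Suc j) * Af a) * W) $ 0 = 1" using Suc W0 by simp
  then show ?case using der unfolding HS D2eq by simp
qed





lemma E1_coeff: "(Gser a j * Af a) $ m = poly (odesol (D1p a) m) (of_nat j)"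
proof -
  have "(\<lambda>j. Gser a j * Af a) j $ m = poly (odesol (D1p a) m) (of_nat j)"
    by (rule odesol_eval[where jz=0 and j=j and E="\<lambda>j. Gser a j * Af a" and Df="D1f a"]) (use E1_ode in \<open>auto simp: D1f_def\<close>)
  then show ?thesis by simp
qed

lemma E2_coeff: 
  assumes "j \<ge> 1"
  shows "(Hser a j * Af a) $ m = poly (odesol (D2p a) m) (of_nat j)"
proof -
  have "(\<lambda>j. Hser a j * Af a) j $ m = poly (odesol (D2p a) m) (of_nat j)"
  proof (rule odesol_eval[where jz=1 and j=j and E="\<lambda>j. Hser a j * Af a" and Df="D2f a"])
    fix j :: nat assume "1 \<le> j"
    then obtain j' where j: "j = Suc j'" by (cases j) auto
    show "fps_deriv (Hser a j * Af a) = Hser a j * Af a * D2f a j" using E2_ode[of a j'] j by simp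
    show "(Hser a j * Af a) $ 0 = 1" using E2_ode[of a j'] j by simp
  qed (use assms in \<open>auto simp: D2f_def\<close>)
  then show ?thesis by simp
qed

definition Lp :: "(nat \<Rightarrow> rat) \<Rightarrow> nat \<Rightarrow> rat poly" where
  "Lp a M = odesol (D1p a) M - odesol (D2p a) M"

lemma odesol_1: "odesol D (Suc 0) = D 0"
  by (simp add: odesol_Suc)

lemma lhs_Lp:
  assumes "j \<ge> 1" "N \<ge> 1"
  shows "lhs_coeff N a j = poly (Lp a (N + 1)) (of_nat j)"
proof -
  define Y where "Y = Gser a j - Hser a j"
  have YA: "Y * Af a = Gser a j * Af a - Hser a j * Af a" by (simp add: Y_def algebra_simps)
  have YAn: "(Y * Af a) $ m = poly (Lp a m) (of_nat j)" for m
    using E1_coeff E2_coeff[OF assms(1)] by (simp add: YA Lp_def)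
  have Lp0: "poly (Lp a 0) x = 0" for x by (simp add: Lp_def)
  have Lp1: "poly (Lp a 1) x = 0" for x by (simp add: Lp_def odesol_1 poly_D1p poly_D2p cA0)
  have Y0: "Y $ 0 = 0" using YAn[of 0] Lp0 by simp
  have Y1: "Y $ 1 = 0"
  proof -
    have "(Y * Af a) $ 1 = Y $ 0 * Af a $ 1 + Y $ 1 * Af a $ 0"
      by (simp add: fps_mult_nth numeral_2_eq_2)
    then show ?thesis using YAn[of 1] Lp1 Y0 by simp
  qed
  define Z where "Z = fps_shift 2 Y"
  have YZ: "Y = Z * fps_X ^ 2"
  proof (rule fps_ext)
    fix m
    show "Y $ m = (Z * fps_X ^ 2) $ m"
      using Y0 Y1 by (cases m; cases "m - 1") (auto simp: Z_def fps_X_power_mult_right_nth)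
  qed
  have "lhs_coeff N a j = (Z * Af a) $ (N - 1)"
    by (simp add: lhs_coeff_def Z_def Y_def Af_def)
  also have "\<dots> = ((Z * Af a) * fps_X ^ 2) $ (N + 1)"
    using assms(2) by (simp add: fps_X_power_mult_right_nth)
  also have "\<dots> = (Y * Af a) $ (N + 1)" by (simp add: YZ ac_simps)
  finally show ?thesis by (simp add: YAn)
qed


lemma D_refl: "poly (D2p a k) x = poly (D1p a k) (1 - x)"
proof -
  have "poly (Fp (Suc k)) (1 - x) = (-1)^k * poly (Fp (Suc k)) x"
    using Fp_refl[of "Suc k" x] by simp
  then show ?thesis
    by (simp add: poly_D1p poly_D2p algebra_simps flip: power_add mult_2)
qed

lemma Lp_refl: "poly (Lp a M) (1 - x) = - poly (Lp a M) x"
proof -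
  have "poly (odesol (D2p a) M) y = poly (odesol (D1p a) M) (1 - y)" for y
    by (rule odesol_refl) (rule D_refl)
  from this[of x] this[of "1 - x"] show ?thesis by (simp add: Lp_def)
qed

lemma Lp_degree: "degree (Lp a M) \<le> 2 * M"
proof -
  have dF: "degree (Fp (Suc k)) \<le> k + 2" for k using Fp_degree[of "Suc k"] by simp
  have d1: "degree (D1p a k) \<le> k + 2" for k
    unfolding D1p_def
    by (rule degree_diff_le; rule order.trans[OF degree_smult_le]) (use dF in auto)
  have d2: "degree (D2p a k) \<le> k + 2" for k
    unfolding D2p_def
    by (rule degree_diff_le) (use dF in \<open>auto intro: order.trans[OF degree_smult_le]\<close>)
  show ?thesis unfolding Lp_def
    by (rule degree_diff_le; rule odesol_degree) (use d1 d2 in auto)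
qed

lemma poly_sum_le:
  fixes q :: "rat poly"
  assumes "degree q \<le> N"
  shows "poly q x = coeff q 0 + (\<Sum>i=1..N. coeff q i * x ^ i)"
proof -
  have "poly q x = (\<Sum>i\<le>degree q. coeff q i * x ^ i)" by (rule poly_altdef)
  also have "\<dots> = (\<Sum>i\<le>N. coeff q i * x ^ i)"
    by (rule sum.mono_neutral_left) (use assms in \<open>auto simp: coeff_eq_0\<close>)
  also have "\<dots> = coeff q 0 + (\<Sum>i=1..N. coeff q i * x ^ i)"
    by (simp add: atMost_atLeast0 sum.atLeast_Suc_atMost)
  finally show ?thesis .
qed

lemma existence:
  assumes "n \<ge> 2"
  shows "\<exists>S. S_spec (2 * n - 1) S"
proof -
  define N where "N = 2 * n - 1"
  have N1: "N \<ge> 1" and NM: "N + 1 = 2 * n" using assms by (simp_all add: N_def)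
  define P where "P a q \<longleftrightarrow> degree q \<le> N \<and> (\<forall>x. poly (Lp a (2 * n)) x = (2 * x - 1) * poly q (x * (x - 1)))" for a q
  have exq: "\<exists>q. P a q" for a
  proof -
    obtain q where q: "degree q \<le> (degree (Lp a (2 * n)) - 1) div 2"
      "\<forall>x. poly (Lp a (2 * n)) x = (2 * x - 1) * poly q (x * (x - 1))"
      using anti_decomp[OF Lp_refl] by blast
    have "(degree (Lp a (2 * n)) - 1) div 2 \<le> N"
      using Lp_degree[of a "2 * n"] unfolding N_def by linarith
    then have "P a q" using q unfolding P_def by (meson order.trans)
    then show ?thesis ..
  qed
  define S where "S i a = (if i = 0 then coeff (SOME q. P a q) 0 - a (N - 1) else coeff (SOME q. P a q) i)" for i a
  have "S_spec N S"
    unfolding S_spec_def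
  proof (intro allI impI)
    fix a :: "nat \<Rightarrow> rat" and j :: nat
    assume j: "1 \<le> j"
    define q where "q = (SOME q. P a q)"
    have Pq: "P a q" unfolding q_def using exq by (rule someI_ex)
    have "lhs_coeff N a j = poly (Lp a (2 * n)) (of_nat j)"
      using lhs_Lp[OF j N1] NM by simp
    also have "\<dots> = (2 * of_nat j - 1) * poly q (of_nat j * (of_nat j - 1))"
      using Pq unfolding P_def by blast
    also have "poly q (of_nat j * (of_nat j - 1)) = coeff q 0 + (\<Sum>i=1..N. coeff q i * (of_nat j * (of_nat j - 1)) ^ i)"
      using Pq unfolding P_def by (intro poly_sum_le) blast
    also have "\<dots> = a (N - 1) + S 0 a + (\<Sum>i=1..N. S i a * (of_nat j * (of_nat j - 1)) ^ i)"
      by (simp add: S_def q_def)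
    finally show "lhs_coeff N a j = (2 * of_nat j - 1) * (a (N - 1) + S 0 a + (\<Sum>i=1..N. S i a * (of_nat j * (of_nat j - 1)) ^ i))" .
  qed
  then show ?thesis unfolding N_def by blast
qed





lemma cm1: "coeff (p * q) 1 = coeff p 0 * coeff q 1 + coeff p 1 * coeff (q::rat poly) 0"
  by (simp add: coeff_mult)

lemma cm1': "coeff (p * q) (Suc 0) = coeff p 0 * coeff q 1 + coeff p 1 * coeff (q::rat poly) 0"
  using cm1 by simp

lemma cm2: "coeff (p * q) 2 = coeff p 0 * coeff q 2 + coeff p 1 * coeff q 1 + coeff p 2 * coeff (q::rat poly) 0"
  by (simp add: coeff_mult eval_nat_numeral atMost_Suc)

lemma odesol_c0:
  assumes "\<And>k. coeff (D k) 0 = 0"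
  shows "coeff (odesol D m) 0 = (if m = 0 then 1 else 0)"
  by (cases m) (simp_all add: odesol_Suc coeff_sum coeff_mult_0 assms)

lemma odesol_c1:
  assumes "\<And>k. coeff (D k) 0 = 0"
  shows "coeff (odesol D (Suc m)) 1 = coeff (D m) 1 / of_nat (Suc m)"
proof -
  have "(\<Sum>k\<le>m. coeff (odesol D k * D (m - k)) 1) = (\<Sum>k\<le>m. (if k = 0 then coeff (D m) 1 else 0))"
    by (intro sum.cong refl) (simp add: cm1 cm1' assms odesol_c0)
  then show ?thesis by (simp add: odesol_Suc coeff_sum del: of_nat_Suc)
qed

lemma odesol_c2:
  assumes "\<And>k. coeff (D k) 0 = 0"
  shows "coeff (odesol D (Suc m)) 2 = (coeff (D m) 2 +
     (\<Sum>k=1..m. coeff (D (k - 1)) 1 / of_nat k * coeff (D (m - k)) 1)) / of_nat (Suc m)"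
proof -
  have "(\<Sum>k\<le>m. coeff (odesol D k * D (m - k)) 2) = (\<Sum>k\<le>m. (if k = 0 then coeff (D m) 2 else 0) + coeff (odesol D k) 1 * coeff (D (m - k)) 1)"
    by (intro sum.cong refl) (simp add: cm2 assms odesol_c0)
  also have "\<dots> = coeff (D m) 2 + (\<Sum>k\<le>m. coeff (odesol D k) 1 * coeff (D (m - k)) 1)"
    by (simp add: sum.distrib)
  also have "(\<Sum>k\<le>m. coeff (odesol D k) 1 * coeff (D (m - k)) 1)
     = (\<Sum>k=1..m. coeff (D (k - 1)) 1 / of_nat k * coeff (D (m - k)) 1)"
  proof -
    have "(\<Sum>k\<le>m. coeff (odesol D k) 1 * coeff (D (m - k)) 1) = (\<Sum>k=1..m. coeff (odesol D k) 1 * coeff (D (m - k)) 1)"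
      by (simp add: atMost_atLeast0 sum.atLeast_Suc_atMost)
    also have "\<dots> = (\<Sum>k=1..m. coeff (D (k - 1)) 1 / of_nat k * coeff (D (m - k)) 1)"
    proof (intro sum.cong refl)
      fix k assume "k \<in> {1..m}"
      then obtain k' where k: "k = Suc k'" by (cases k) auto
      show "coeff (odesol D k) 1 * coeff (D (m - k)) 1 = coeff (D (k - 1)) 1 / of_nat k * coeff (D (m - k)) 1"
        unfolding k odesol_c1[OF assms] by simp
    qed
    finally show ?thesis .
  qed
  finally show ?thesis by (simp add: odesol_Suc coeff_sum del: of_nat_Suc)
qed


lemma Af_a0: "Af (\<lambda>_. 0) = 1"
  by (rule fps_ext) (simp add: Af_def aser_def fps_X_power_mult_right_nth)

lemma cA_a0: "cA (\<lambda>_. 0) k = 0"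
  by (simp add: cA_def Af_a0)

lemma coeff_Fp0: "coeff (Fp m) 0 = 0"
  using Fp_0[of m] by (simp add: poly_0_coeff_0)

lemma D1_a0: "D1p (\<lambda>_. 0) k = - smult ((-1)^k) (Fp (Suc k))"
  by (simp add: D1p_def cA_a0)

lemma D2_a0: "D2p (\<lambda>_. 0) k = - Fp (Suc k)"
  by (simp add: D2p_def cA_a0)

lemma D1c0: "coeff (D1p (\<lambda>_. 0) k) 0 = 0" by (simp add: D1_a0 coeff_Fp0)
lemma D2c0: "coeff (D2p (\<lambda>_. 0) k) 0 = 0" by (simp add: D2_a0 coeff_Fp0)
lemma D1c1: "coeff (D1p (\<lambda>_. 0) k) 1 = - ((-1::rat)^k * bernoulli (Suc k))" by (simp add: D1_a0 Fp_coeff1[unfolded One_nat_def])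
lemma D2c1: "coeff (D2p (\<lambda>_. 0) k) 1 = - bernoulli (Suc k)" by (simp add: D2_a0 Fp_coeff1[unfolded One_nat_def])
lemma D1c2: "coeff (D1p (\<lambda>_. 0) k) 2 = - ((-1::rat)^k * coeff (Fp (Suc k)) 2)" by (simp add: D1_a0)
lemma D2c2: "coeff (D2p (\<lambda>_. 0) k) 2 = - coeff (Fp (Suc k)) 2" by (simp add: D2_a0)

lemma Lp_low:
  assumes "n \<ge> 2"
  shows "coeff (Lp (\<lambda>_. 0) (2 * n)) 0 = 0"
    "coeff (Lp (\<lambda>_. 0) (2 * n)) 1 = bernoulli (2 * n) / of_nat n"
    "coeff (Lp (\<lambda>_. 0) (2 * n)) 2 = 0"
proof -
  define m where "m = 2 * n - 1"
  have nm: "2 * n = Suc m" using assms by (simp add: m_def)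
  have modd: "odd m" using assms by (simp add: m_def)
  show "coeff (Lp (\<lambda>_. 0) (2 * n)) 0 = 0"
    unfolding Lp_def using odesol_c0[OF D1c0] odesol_c0[OF D2c0] assms by simp
  have "coeff (Lp (\<lambda>_. 0) (2 * n)) 1 = (- ((-1::rat)^m * bernoulli (Suc m)) + bernoulli (Suc m)) / of_nat (Suc m)"
    unfolding Lp_def nm coeff_diff odesol_c1[OF D1c0] odesol_c1[OF D2c0] D1c1 D2c1
    by (simp add: diff_divide_distrib del: of_nat_Suc)
  also have "\<dots> = bernoulli (2 * n) / of_nat n"
    using modd nm[symmetric] assms by (simp add: field_simps)
  finally show "coeff (Lp (\<lambda>_. 0) (2 * n)) 1 = bernoulli (2 * n) / of_nat n" .
  have F2: "coeff (Fp (Suc m)) 2 = 0"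
  proof (rule Fp_coeff2)
    show "even (Suc m)" using nm by (metis even_mult_iff even_numeral)
    show "Suc m \<ge> 4" using nm assms by linarith
  qed
  have cross: "(\<Sum>k=1..m. coeff (D1p (\<lambda>_. 0) (k - 1)) 1 / of_nat k * coeff (D1p (\<lambda>_. 0) (m - k)) 1)
     = (\<Sum>k=1..m. coeff (D2p (\<lambda>_. 0) (k - 1)) 1 / of_nat k * coeff (D2p (\<lambda>_. 0) (m - k)) 1)"
  proof (intro sum.cong refl)
    fix k assume k: "k \<in> {1..m}"
    have "even (k - 1 + (m - k))" using k modd by (simp add: m_def) presburger
    then have "(-1::rat)^(k-1) * (-1)^(m-k) = 1" by (simp add: power_add[symmetric])
    then show "coeff (D1p (\<lambda>_. 0) (k - 1)) 1 / of_nat k * coeff (D1p (\<lambda>_. 0) (m - k)) 1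
        = coeff (D2p (\<lambda>_. 0) (k - 1)) 1 / of_nat k * coeff (D2p (\<lambda>_. 0) (m - k)) 1"
      unfolding D1c1 D2c1 
      by (metis (no_types, lifting) mult.assoc mult.left_commute mult_minus_left mult_1 minus_mult_minus times_divide_eq_left)
  qed
  show "coeff (Lp (\<lambda>_. 0) (2 * n)) 2 = 0"
    unfolding Lp_def nm coeff_diff odesol_c2[OF D1c0] odesol_c2[OF D2c0] D1c2 D2c2 F2 cross
    by simp
qed


lemma sum_split3:
  fixes N :: nat
  assumes "N \<ge> 3"
  shows "(\<Sum>i=1..N. f i) = f 1 + f 2 + (\<Sum>i=3..N. (f i :: rat))"
proof -
  have "(\<Sum>i=1..N. f i) = f 1 + (\<Sum>i=Suc 1..N. f i)"
    using assms by (intro sum.atLeast_Suc_atMost) simp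
  also have "(\<Sum>i=Suc 1..N. f i) = f (Suc 1) + (\<Sum>i=Suc (Suc 1)..N. f i)"
    using assms by (intro sum.atLeast_Suc_atMost) simp
  finally show ?thesis by (simp add: eval_nat_numeral)
qed

lemma value_part:
  assumes n2: "n \<ge> 2" and spec: "S_spec (2 * n - 1) S"
  shows "S 2 (\<lambda>_. 0) = - 3 * bernoulli (2 * n) / of_nat n"
proof -
  define N where "N = 2 * n - 1"
  define c where "c i = S i (\<lambda>_. 0)" for i
  have N3: "N \<ge> 3" and N1: "N \<ge> 1" and NM: "N + 1 = 2 * n" using n2 by (simp_all add: N_def)
  define V where "V = [:0,-1,1::rat:]"
  define T where "T = (\<Sum>i=3..N. smult (c i) (V ^ (i - 3)))"
  define R where "R = [:-1,2:] * ([:c 0:] + smult (c 1) V + smult (c 2) (V^2))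
      + [:0,1:]^3 * ([:-1,2:] * [:-1,1:]^3 * T)"
  have polyV: "poly V x = x * (x - 1)" for x by (simp add: V_def algebra_simps)
  have polyT: "poly T x = (\<Sum>i=3..N. c i * (x * (x - 1)) ^ (i - 3))" for x
    by (simp add: T_def poly_sum polyV)
  have "Lp (\<lambda>_. 0) (2 * n) = R"
  proof (rule poly_eq_nat[where k=1])
    fix j :: nat assume j: "j \<ge> 1"
    define x where "x = (of_nat j :: rat)"
    define v where "v = x * (x - 1)"
    have "poly (Lp (\<lambda>_. 0) (2 * n)) x = lhs_coeff N (\<lambda>_. 0) j"
      using lhs_Lp[OF j N1] NM by (simp add: x_def)
    also have "\<dots> = (2 * x - 1) * (c 0 + (\<Sum>i=1..N. c i * v ^ i))"
      using spec j unfolding S_spec_def N_def[symmetric] by (simp add: c_def x_def v_def)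
    also have "(\<Sum>i=1..N. c i * v ^ i) = c 1 * v + c 2 * v^2 + v^3 * (\<Sum>i=3..N. c i * v ^ (i - 3))"
    proof -
      have "(\<Sum>i=3..N. c i * v ^ i) = v^3 * (\<Sum>i=3..N. c i * v ^ (i - 3))"
        unfolding sum_distrib_left
      proof (intro sum.cong refl)
        fix i assume "i \<in> {3..N}"
        then have "v ^ i = v ^ 3 * v ^ (i - 3)" by (simp flip: power_add)
        then show "c i * v ^ i = v ^ 3 * (c i * v ^ (i - 3))" by simp
      qed
      then show ?thesis using sum_split3[OF N3, of "\<lambda>i. c i * v ^ i"] by simp
    qed
    also have "(2 * x - 1) * (c 0 + (c 1 * v + c 2 * v^2 + v^3 * (\<Sum>i=3..N. c i * v ^ (i - 3)))) = poly R x"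
      by (simp add: R_def polyV polyT v_def algebra_simps power3_eq_cube power2_eq_square)
    finally show "poly (Lp (\<lambda>_. 0) (2 * n)) (of_nat j) = poly R (of_nat j)" by (simp add: x_def)
  qed
  moreover have "coeff ([:0,1:]^3 * W) k = 0" if "k < 3" for W :: "rat poly" and k
    using that by (simp add: Xpow coeff_monom_mult)
  ultimately have e: "coeff (Lp (\<lambda>_. 0) (2 * n)) k = coeff ([:-1,2:] * ([:c 0:] + smult (c 1) V + smult (c 2) (V^2))) k" if "k < 3" for k
    using that by (simp add: R_def)
  have r0: "coeff ([:-1,2:] * ([:c 0:] + smult (c 1) V + smult (c 2) (V^2))) 0 = - c 0"
    by (simp add: V_def power2_eq_square)
  have r1: "coeff ([:-1,2:] * ([:c 0:] + smult (c 1) V + smult (c 2) (V^2))) 1 = 2 * c 0 + c 1"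
    by (simp add: V_def power2_eq_square)
  have r2: "coeff ([:-1,2:] * ([:c 0:] + smult (c 1) V + smult (c 2) (V^2))) 2 = - 3 * c 1 - c 2"
    by (simp add: V_def power2_eq_square eval_nat_numeral)
  have "c 0 = 0" using e[of 0] r0 Lp_low(1)[OF n2] by simp
  moreover have "2 * c 0 + c 1 = bernoulli (2 * n) / of_nat n" using e[of 1] r1 Lp_low(2)[OF n2] by simp
  moreover have "- 3 * c 1 - c 2 = 0" using e[of 2] r2 Lp_low(3)[OF n2] by simp
  ultimately show ?thesis by (simp add: c_def)
qed

theorem proposition4p7:
  fixes n :: nat
  assumes "n \<ge> 2"
  shows "(\<exists>S. S_spec (2 * n - 1) S) \<and>
         (\<forall>S. S_spec (2 * n - 1) S \<longrightarrow>
              S 2 (\<lambda>_. 0) = - 3 * bernoulli (2 * n) / of_nat n)"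
  using existence[OF assms] value_part[OF assms] by blast


end
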